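(* Let $N\ge3$, $\mu\ge0$, assume (K0) and (F0), and let $p>p_S(\alpha)$. There exist $\varepsilon_0>0$ and $C_0>0$ such that for every $\varepsilon\in(0,\varepsilon_0]$ there is $\rho>0$ with the following property: if $\zeta>0$ and $r_1\in(0,\rho)$ satisfy $$|u(r_1,\zeta)-\gamma r_1^{-\theta}|\le\varepsilon r_1^{-\theta}\quad\text{and}\quad |u_r(r_1,\zeta)+\theta\gamma r_1^{-1-\theta}|\le\varepsilon r_1^{-1-\theta},$$ then $r_0(\zeta)>\rho$ and for all $r\in(r_1,\rho]$, $$|u(r,\zeta)-\gamma r^{-\theta}|\le C_0\varepsilon r^{-\theta},\qquad |u_r(r,\zeta)+\theta\gamma r^{-1-\theta}|\le C_0\varepsilon r^{-1-\theta}.$$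
   Context: (K0): $K:(0,\infty)\to(0,\infty)$ is continuous and $K(r)=(k_0+o(1))r^{\alpha}$ as $r\to0$ for some $\alpha>-2$, $k_0>0$. (F0): $f:(0,\infty)\to[0,\infty)$ is continuous, not identically zero, and $f(r)=O(r^{\nu})$ as $r\to0$ for some $\nu>-2$. $p_S(\alpha)=\frac{N+2+2\alpha}{N-2}$, $\theta:=\frac{2+\alpha}{p-1}$, $\gamma:=k_0^{-1/(p-1)}\big(\theta(N-2-\theta)\big)^{1/(p-1)}$. For $\zeta>0$, $u(\cdot,\zeta)$ denotes the regular solution of $u''+\frac{N-1}{r}u'+K(r)\max\{u,0\}^p+\mu f(r)=0$ with $u(0)=\zeta$, i.e. the continuous solution on $[0,\infty)$ of $u(r)=\zeta-\int_0^r\frac{s^{2-N}-r^{2-N}}{N-2}s^{N-1}\big(K(s)\max\{u(s),0\}^p+\mu f(s)\big)ds$; $r_0(\zeta)\in(0,\infty]$ is its first zero ($r_0(\zeta)=\infty$ if $u(\cdot,\zeta)>0$ on $(0,\infty)$). *)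

theory Defs
  imports "HOL-Analysis.Analysis" "HOL-Library.Landau_Symbols"
begin

definition pS :: "nat \<Rightarrow> real \<Rightarrow> real" where
  "pS N \<alpha> = (real N + 2 + 2 * \<alpha>) / (real N - 2)"

definition theta :: "real \<Rightarrow> real \<Rightarrow> real" where
  "theta \<alpha> p = (2 + \<alpha>) / (p - 1)"

definition gam :: "nat \<Rightarrow> real \<Rightarrow> real \<Rightarrow> real \<Rightarrow> real" where
  "gam N k0 \<alpha> p =
     k0 powr (- 1 / (p - 1)) *
     (theta \<alpha> p * (real N - 2 - theta \<alpha> p)) powr (1 / (p - 1))"

definition regular_solution ::
  "nat \<Rightarrow> (real \<Rightarrow> real) \<Rightarrow> real \<Rightarrow> real \<Rightarrow> (real \<Rightarrow> real) \<Rightarrow> real \<Rightarrow> (real \<Rightarrow> real) \<Rightarrow> bool"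
  where
  "regular_solution N K p \<mu> f \<zeta> u \<longleftrightarrow>
     continuous_on {0..} u \<and>
     (\<forall>r\<ge>0. ((\<lambda>s. (s powr (2 - real N) - r powr (2 - real N)) / (real N - 2)
                     * s powr (real N - 1)
                     * (K s * (max (u s) 0) powr p + \<mu> * f s))
               has_integral (\<zeta> - u r)) {0..r})"

end

theory Submission
  imports Defs "HOL-Analysis.Analysis" "HOL-Library.Landau_Symbols"
begin

lemma ftc_open:
  fixes h :: "real \<Rightarrow> real"
  assumes hc: "continuous_on {0<..} h" and hi: "\<And>c. c > 0 \<Longrightarrow> h integrable_on {0..c}"
    and r0: "r0 > 0"
  shows "((\<lambda>r. integral {0..r} h) has_real_derivative h r0) (at r0)"
proof -
  define c where "c = r0/2"
  define b where "b = 2*r0"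
  have c: "0 < c" "c < r0" "r0 < b" using r0 by (auto simp: c_def b_def)
  have cc: "continuous_on {c..b} h"
    by (rule continuous_on_subset[OF hc]) (use c in auto)
  have "((\<lambda>x. integral {c..x} h) has_real_derivative h r0) (at r0 within {c..b})"
    using c by (intro integral_has_real_derivative[OF cc]) auto
  moreover have "at r0 within {c..b} = at r0"
    using c by (intro at_within_interior) auto
  ultimately have d1: "((\<lambda>x. integral {0..c} h + integral {c..x} h) has_real_derivative h r0) (at r0)"
    by (auto intro!: derivative_eq_intros)
  show ?thesis
  proof (rule has_field_derivative_transform_within_open[OF d1, of "{c<..}"])
    fix x assume "x \<in> {c<..}"
    then show "integral {0..c} h + integral {c..x} h = integral {0..x} h"
      using c hi[of x] Henstock_Kurzweil_Integration.integral_combine[where a=0 and c=c and b=x and f=h] by auto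
  qed (use c in auto)
qed

lemma reg_props:
  fixes N :: nat and K f u :: "real \<Rightarrow> real" and p \<mu> \<zeta> :: real
  assumes N: "N \<ge> 3" and K_cont: "continuous_on {0<..} K"
    and f_cont: "continuous_on {0<..} f" and p: "p > 0"
    and reg: "regular_solution N K p \<mu> f \<zeta> u"
  assumes g_def: "g = (\<lambda>s. K s * max (u s) 0 powr p + \<mu> * f s)"
  assumes H2_def: "H2 = (\<lambda>s. s powr (real N - 1) * g s)"
  shows "u 0 = \<zeta>" and "\<And>c. c > 0 \<Longrightarrow> H2 integrable_on {0..c}"
    and "\<And>r. r > 0 \<Longrightarrow> ((\<lambda>r. integral {0..r} H2) has_real_derivative H2 r) (at r)"
    and "\<And>r. r > 0 \<Longrightarrow> (u has_real_derivative (- (r powr (1 - real N)) * integral {0..r} H2)) (at r)"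
    and "continuous_on {0<..} H2"
proof -
  define G where "G = (\<lambda>r s. (s powr (2 - real N) - r powr (2 - real N)) / (real N - 2) * H2 s)"
  have uc: "continuous_on {0..} u" and hi: "\<And>r. r \<ge> 0 \<Longrightarrow> (G r has_integral (\<zeta> - u r)) {0..r}"
    using reg unfolding regular_solution_def G_def H2_def g_def by (auto simp: mult.assoc)
  have N2: "real N - 2 > 0" using N by auto
  have uc': "continuous_on {0<..} u" by (rule continuous_on_subset[OF uc]) auto
  have gc: "continuous_on {0<..} g"
    unfolding g_def
    by (intro continuous_intros K_cont f_cont continuous_on_powr' uc') (use p in auto)
  show H2c: "continuous_on {0<..} H2"
    unfolding H2_def by (intro continuous_intros gc) auto
  have H1c: "continuous_on {0<..} (\<lambda>s. s powr (2 - real N) * H2 s)"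
    by (intro continuous_intros H2c) auto
  have "(G 0 has_integral (\<zeta> - u 0)) {0}" using hi[of 0] by simp
  then have "\<zeta> - u 0 = 0" using has_integral_refl(2) has_integral_unique by blast
  then show "u 0 = \<zeta>" by simp
  show H2i: "H2 integrable_on {0..c}" if c: "c > 0" for c
  proof -
    define q where "q = (c powr (2 - real N) - (2*c) powr (2 - real N)) / (real N - 2)"
    have "(2*c) powr (2 - real N) < c powr (2 - real N)"
      using c N by (intro powr_less_mono2_neg) auto
    then have q: "q > 0" using N2 unfolding q_def by simp
    have i1: "G c integrable_on {0..c}" using hi[of c] c has_integral_integrable by force
    have "G (2*c) integrable_on {0..2*c}" using hi[of "2*c"] c has_integral_integrable by force
    then have i2: "G (2*c) integrable_on {0..c}"
      by (rule integrable_subinterval_real) (use c in auto)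
    have "(\<lambda>s. (G (2*c) s - G c s) / q) integrable_on {0..c}"
      by (intro integrable_on_divide integrable_diff i1 i2)
    moreover have "(\<lambda>s. (G (2*c) s - G c s) / q) = H2"
    proof (rule ext)
      fix s
      have aux: "\<And>n a b c h. (n::real) \<noteq> 0 \<Longrightarrow> (a-b)/n*h - (a-c)/n*h = (c-b)/n*h"
        by (simp add: field_simps)
      have "G (2*c) s - G c s = q * H2 s" using N2 unfolding G_def q_def by (subst aux) auto
      then show "(G (2*c) s - G c s) / q = H2 s" using q by simp
    qed
    ultimately show ?thesis by simp
  qed
  show Id: "((\<lambda>r. integral {0..r} H2) has_real_derivative H2 r) (at r)" if "r > 0" for r
    by (rule ftc_open[OF H2c H2i that])
  have H1i: "(\<lambda>s. s powr (2 - real N) * H2 s) integrable_on {0..r}" if r: "r > 0" for r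
  proof -
    have "(\<lambda>s. (real N - 2) * G r s + r powr (2 - real N) * H2 s) integrable_on {0..r}"
      using hi[of r] r H2i[OF r]
      by (intro integrable_add integrable_on_cmult_left[where c="real N - 2", simplified]
          integrable_on_cmult_left[where c="r powr (2 - real N)", simplified]) auto
    moreover have "(\<lambda>s. (real N - 2) * G r s + r powr (2 - real N) * H2 s) = (\<lambda>s. s powr (2 - real N) * H2 s)"
      using N2 by (auto simp: G_def field_simps)
    ultimately show ?thesis by simp
  qed
  have Jd: "((\<lambda>r. integral {0..r} (\<lambda>s. s powr (2 - real N) * H2 s)) has_real_derivative r powr (2 - real N) * H2 r) (at r)" if "r > 0" for r
    using ftc_open[OF H1c H1i that] .
  have urep: "u r = \<zeta> - (integral {0..r} (\<lambda>s. s powr (2 - real N) * H2 s) - r powr (2 - real N) * integral {0..r} H2) / (real N - 2)"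
    if r: "r > 0" for r
  proof -
    have "G r = (\<lambda>s. (s powr (2 - real N) * H2 s - r powr (2 - real N) * H2 s) / (real N - 2))"
      by (auto simp: G_def field_simps)
    then have "integral {0..r} (G r) = (integral {0..r} (\<lambda>s. s powr (2 - real N) * H2 s) - r powr (2 - real N) * integral {0..r} H2) / (real N - 2)"
      using H1i[OF r] H2i[OF r] integrable_on_cmult_left[where c="r powr (2 - real N)", OF H2i[OF r], simplified]
      by (simp add: integral_diff)
    moreover have "integral {0..r} (G r) = \<zeta> - u r" using hi[of r] r by (auto intro: integral_unique)
    ultimately show ?thesis by simp
  qed
  show "(u has_real_derivative (- (r powr (1 - real N)) * integral {0..r} H2)) (at r)" if r: "r > 0" for r
  proof -
    have d: "((\<lambda>r. \<zeta> - (integral {0..r} (\<lambda>s. s powr (2 - real N) * H2 s) - r powr (2 - real N) * integral {0..r} H2) / (real N - 2))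
       has_real_derivative (- (r powr (1 - real N)) * integral {0..r} H2)) (at r)"
    proof -
      have "((\<lambda>r. \<zeta> - (integral {0..r} (\<lambda>s. s powr (2 - real N) * H2 s) - r powr (2 - real N) * integral {0..r} H2) / (real N - 2))
       has_real_derivative (- (r powr (2 - real N) * H2 r - ((2 - real N) * r powr (2 - real N - 1) * integral {0..r} H2 + r powr (2 - real N) * H2 r)) / (real N - 2))) (at r)"
        using r N by (auto intro!: derivative_eq_intros Jd Id)
      moreover have "(- (r powr (2 - real N) * H2 r - ((2 - real N) * r powr (2 - real N - 1) * integral {0..r} H2 + r powr (2 - real N) * H2 r)) / (real N - 2))
          = (- (r powr (1 - real N)) * integral {0..r} H2)"
        using N2 by (simp add: field_simps)
      ultimately show ?thesis by simp
    qed
    show ?thesis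
      by (rule has_field_derivative_transform_within_open[OF d, of "{0<..}"]) (use r urep in auto)
  qed
qed

lemma sum_squares_bound: "2 * ((a::real) * b) \<le> a^2 + b^2"
proof -
  have "0 \<le> (a - b)^2" by simp
  then show ?thesis by (simp add: power2_diff algebra_simps)
qed

lemma key_ineq:
  fixes \<delta> \<kappa> x y Q e \<epsilon> K :: real
  assumes d: "\<delta> > 0" and k: "\<kappa> > 0"
    and hQ: "\<bar>Q\<bar> \<le> (\<delta> * min \<kappa> 1) / (8 * (\<delta> + 2)) * \<bar>x\<bar>"
    and he: "\<bar>e\<bar> \<le> (\<delta> * min \<kappa> 1) / (4 * (\<delta> + 2)) * \<epsilon>"
    and eps: "\<epsilon> > 0"
    and V: "(\<kappa> + \<delta>^2/2) * x^2 + \<delta> * x * y + y^2 = K * \<epsilon>^2"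
    and K: "K \<ge> 2 * (\<kappa> + \<delta>^2/2 + \<delta> + 1)"
  shows "- \<delta> * \<kappa> * x^2 - \<delta> * y^2 - (\<delta> * x + 2 * y) * (Q + e) < 0"
proof -
  define c3 where "c3 = \<delta> * min \<kappa> 1"
  define D where "D = \<delta> + 2"
  define s where "s = \<bar>x\<bar> + \<bar>y\<bar>"
  define n2 where "n2 = x^2 + y^2"
  have c3: "c3 > 0" using d k by (simp add: c3_def)
  have D: "D > 0" using d by (simp add: D_def)
  have h1: "\<delta> * \<kappa> * x^2 + \<delta> * y^2 \<ge> c3 * n2"
  proof -
    have a: "min \<kappa> 1 * x^2 \<le> \<kappa> * x^2" by (auto intro: mult_right_mono)
    have b: "min \<kappa> 1 * y^2 \<le> 1 * y^2" by (intro mult_right_mono) auto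
    have "\<delta> * (min \<kappa> 1 * x^2) \<le> \<delta> * (\<kappa> * x^2)" using a d by (intro mult_left_mono) auto
    moreover have "\<delta> * (min \<kappa> 1 * y^2) \<le> \<delta> * (1 * y^2)" using b d by (intro mult_left_mono) auto
    ultimately show ?thesis unfolding c3_def n2_def by (simp add: algebra_simps)
  qed
  have xy: "\<delta> * x * y \<le> \<delta> * n2"
  proof -
    have "2 * (x*y) \<le> x^2 + y^2" using sum_squares_bound[of x y] by simp
    moreover have "x^2 \<ge> 0" "y^2 \<ge> 0" by auto
    ultimately have "x * y \<le> n2" unfolding n2_def by linarith
    then show ?thesis using d by (simp add: mult.assoc)
  qed
  have h2: "K * \<epsilon>^2 \<le> (\<kappa> + \<delta>^2/2 + \<delta> + 1) * n2"
  proof -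
    have e: "(\<kappa> + \<delta>^2/2 + \<delta> + 1) * n2 = ((\<kappa> + \<delta>^2/2) * x^2 + \<delta> * x * y + y^2)
       + (\<delta> * n2 - \<delta> * x * y) + x^2 + (\<kappa> + \<delta>^2/2) * y^2"
      by (simp add: n2_def algebra_simps)
    have "(\<kappa> + \<delta>^2/2) * y^2 \<ge> 0" "x^2 \<ge> 0" using k by auto
    then show ?thesis using V xy e by linarith
  qed
  have c2: "\<kappa> + \<delta>^2/2 + \<delta> + 1 > 0" using d k zero_le_power2[of \<delta>] by linarith
  have "2 * (\<kappa> + \<delta>^2/2 + \<delta> + 1) * \<epsilon>^2 \<le> K * \<epsilon>^2"
    using K by (simp add: mult_right_mono)
  with h2 have "2 * (\<kappa> + \<delta>^2/2 + \<delta> + 1) * \<epsilon>^2 \<le> (\<kappa> + \<delta>^2/2 + \<delta> + 1) * n2" by linarith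
  then have "(\<kappa> + \<delta>^2/2 + \<delta> + 1) * (2 * \<epsilon>^2) \<le> (\<kappa> + \<delta>^2/2 + \<delta> + 1) * n2"
    by (simp add: algebra_simps)
  then have n2e: "2 * \<epsilon>^2 \<le> n2" using c2 by (simp add: mult_le_cancel_left_pos)
  have h3: "\<bar>\<delta> * x + 2 * y\<bar> \<le> D * s"
  proof -
    have "\<bar>\<delta> * x + 2 * y\<bar> \<le> \<bar>\<delta> * x\<bar> + \<bar>2 * y\<bar>" by (rule abs_triangle_ineq)
    also have "\<dots> = \<delta> * \<bar>x\<bar> + 2 * \<bar>y\<bar>" using d by (simp add: abs_mult)
    also have "\<dots> \<le> (\<delta> + 2) * (\<bar>x\<bar> + \<bar>y\<bar>)" using d by (simp add: algebra_simps)
    finally show ?thesis unfolding D_def s_def .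
  qed
  have h4: "s^2 \<le> 2 * n2"
    unfolding s_def n2_def using sum_squares_bound[of "\<bar>x\<bar>" "\<bar>y\<bar>"]
    by (simp add: power2_sum)
  have xs: "\<bar>x\<bar> \<le> s" unfolding s_def by simp
  have s0: "s \<ge> 0" unfolding s_def by simp
  have h5: "\<bar>(\<delta> * x + 2 * y) * Q\<bar> \<le> c3 * s^2 / 8"
  proof -
    have "\<bar>(\<delta> * x + 2 * y) * Q\<bar> \<le> (D * s) * (c3 / (8 * D) * \<bar>x\<bar>)"
      unfolding abs_mult using h3 hQ unfolding c3_def D_def
      by (intro mult_mono) auto
    also have "\<dots> = c3 * s * \<bar>x\<bar> / 8" using D by (simp add: field_simps)
    also have "\<dots> \<le> c3 * s * s / 8" using xs c3 s0 by (intro divide_right_mono mult_left_mono) auto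
    finally show ?thesis by (simp add: power2_eq_square)
  qed
  have h6: "\<bar>(\<delta> * x + 2 * y) * e\<bar> \<le> c3 * (s^2 + \<epsilon>^2) / 8"
  proof -
    have "\<bar>(\<delta> * x + 2 * y) * e\<bar> \<le> (D * s) * (c3 / (4 * D) * \<epsilon>)"
      unfolding abs_mult using h3 he unfolding c3_def D_def
      by (intro mult_mono) auto
    also have "\<dots> = c3 * (2 * (s * \<epsilon>)) / 8" using D by (simp add: field_simps)
    also have "\<dots> \<le> c3 * (s^2 + \<epsilon>^2) / 8"
      using sum_squares_bound[of s \<epsilon>] c3 by (intro divide_right_mono mult_left_mono) auto
    finally show ?thesis .
  qed
  have "- (\<delta> * x + 2 * y) * (Q + e) \<le> c3 * s^2 / 8 + c3 * (s^2 + \<epsilon>^2) / 8"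
  proof -
    have "- (\<delta> * x + 2 * y) * (Q + e) = - ((\<delta> * x + 2 * y) * Q) - ((\<delta> * x + 2 * y) * e)"
      by (simp add: algebra_simps)
    moreover have "- ((\<delta> * x + 2 * y) * Q) \<le> \<bar>(\<delta> * x + 2 * y) * Q\<bar>" by linarith
    moreover have "- ((\<delta> * x + 2 * y) * e) \<le> \<bar>(\<delta> * x + 2 * y) * e\<bar>" by linarith
    ultimately show ?thesis using h5 h6 by linarith
  qed
  also have "\<dots> \<le> c3 * n2 / 2 + c3 * \<epsilon>^2 / 8"
  proof -
    have "c3 * s^2 \<le> c3 * (2 * n2)" using h4 c3 by (intro mult_left_mono) auto
    then show ?thesis by (simp add: field_simps)
  qed
  finally have F: "- (\<delta> * x + 2 * y) * (Q + e) \<le> c3 * n2 / 2 + c3 * \<epsilon>^2 / 8" .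
  have "- \<delta> * \<kappa> * x^2 - \<delta> * y^2 - (\<delta> * x + 2 * y) * (Q + e) \<le> - c3 * n2 / 2 + c3 * \<epsilon>^2 / 8"
    using h1 F by (simp only: minus_mult_left)
  also have "\<dots> < 0"
  proof -
    have "c3 * (2 * \<epsilon>^2) \<le> c3 * n2" using n2e c3 by (intro mult_left_mono) auto
    moreover have "c3 * \<epsilon>^2 > 0" using c3 eps by simp
    ultimately show ?thesis by linarith
  qed
  finally show ?thesis .
qed

lemma consts_facts:
  fixes N :: nat and \<alpha> k0 p :: real
  assumes N: "N \<ge> 3" and alpha: "\<alpha> > -2" and k0: "k0 > 0" and p: "p > pS N \<alpha>"
  shows "p > 1" "theta \<alpha> p > 0" "2 * theta \<alpha> p < real N - 2"
    "theta \<alpha> p * (p - 1) = 2 + \<alpha>" "gam N k0 \<alpha> p > 0"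
    "k0 * gam N k0 \<alpha> p powr (p - 1) = theta \<alpha> p * (real N - 2 - theta \<alpha> p)"
proof -
  have N2: "real N - 2 > 0" using N by auto
  have "pS N \<alpha> - 1 = (4 + 2 * \<alpha>) / (real N - 2)"
    unfolding pS_def using N2 by (simp add: field_simps)
  moreover have "(4 + 2 * \<alpha>) / (real N - 2) > 0" using alpha N2 by simp
  ultimately have pS1: "pS N \<alpha> > 1" by linarith
  show p1: "p > 1" using p pS1 by linarith
  show th: "theta \<alpha> p > 0" unfolding theta_def using p1 alpha by simp
  show thp: "theta \<alpha> p * (p - 1) = 2 + \<alpha>" unfolding theta_def using p1 by simp
  have "(p - 1) * (real N - 2) > (pS N \<alpha> - 1) * (real N - 2)"
    using p N2 by (intro mult_strict_right_mono) auto
  also have "(pS N \<alpha> - 1) * (real N - 2) = 4 + 2 * \<alpha>"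
    unfolding pS_def using N2 by (simp add: field_simps)
  finally have "2 * (2 + \<alpha>) < (p - 1) * (real N - 2)" by simp
  then show th2: "2 * theta \<alpha> p < real N - 2"
    unfolding theta_def using p1 by (simp add: field_simps)
  have td: "theta \<alpha> p * (real N - 2 - theta \<alpha> p) > 0" using th th2 by simp
  show "gam N k0 \<alpha> p > 0" unfolding gam_def using k0 td by (intro mult_pos_pos) auto
  have "gam N k0 \<alpha> p powr (p - 1) =
      (k0 powr (- 1 / (p - 1))) powr (p - 1) * ((theta \<alpha> p * (real N - 2 - theta \<alpha> p)) powr (1 / (p - 1))) powr (p - 1)"
    unfolding gam_def by (simp add: powr_mult)
  also have "\<dots> = k0 powr (-1) * (theta \<alpha> p * (real N - 2 - theta \<alpha> p))"
    using p1 td by (simp add: powr_powr)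
  finally show "k0 * gam N k0 \<alpha> p powr (p - 1) = theta \<alpha> p * (real N - 2 - theta \<alpha> p)"
    using k0 by (simp add: powr_minus field_simps)
qed

lemma err_tendsto:
  fixes K f :: "real \<Rightarrow> real" and \<alpha> k0 \<nu> \<mu> B \<theta> :: real
  assumes K_asym: "((\<lambda>r. K r / r powr \<alpha>) \<longlongrightarrow> k0) (at_right 0)"
    and f_asym: "f \<in> O[at_right 0](\<lambda>r. r powr \<nu>)" and nu: "\<nu> > -2" and th: "\<theta> > 0"
  shows "((\<lambda>r. \<bar>K r / r powr \<alpha> - k0\<bar> * B + \<mu> * (r powr (\<theta> + 2) * \<bar>f r\<bar>)) \<longlongrightarrow> 0) (at_right 0)"
proof -
  have t1: "((\<lambda>r. \<bar>K r / r powr \<alpha> - k0\<bar> * B) \<longlongrightarrow> 0) (at_right 0)"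
  proof -
    have "((\<lambda>r. K r / r powr \<alpha> - k0) \<longlongrightarrow> k0 - k0) (at_right 0)"
      by (intro tendsto_diff K_asym tendsto_const)
    then have "((\<lambda>r. K r / r powr \<alpha> - k0) \<longlongrightarrow> 0) (at_right 0)" by simp
    then have "((\<lambda>r. \<bar>K r / r powr \<alpha> - k0\<bar>) \<longlongrightarrow> 0) (at_right 0)"
      by (rule tendsto_rabs_zero)
    then show ?thesis by (rule tendsto_mult_left_zero)
  qed
  obtain c where c: "c > 0" "eventually (\<lambda>r. norm (f r) \<le> c * norm (r powr \<nu>)) (at_right 0)"
    using f_asym by (elim landau_o.bigE)
  have t2: "((\<lambda>r. r powr (\<theta> + 2) * \<bar>f r\<bar>) \<longlongrightarrow> 0) (at_right 0)"
  proof (rule Lim_null_comparison)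
    have "eventually (\<lambda>r::real. r > 0) (at_right 0)" by (simp add: eventually_at_right_less)
    then show "eventually (\<lambda>r. norm (r powr (\<theta> + 2) * \<bar>f r\<bar>) \<le> c * r powr (\<theta> + 2 + \<nu>)) (at_right 0)"
      using c(2)
    proof eventually_elim
      case (elim r)
      have "norm (r powr (\<theta> + 2) * \<bar>f r\<bar>) = r powr (\<theta> + 2) * norm (f r)" using elim by simp
      also have "\<dots> \<le> r powr (\<theta> + 2) * (c * norm (r powr \<nu>))"
        using elim by (intro mult_left_mono) auto
      also have "\<dots> = c * r powr (\<theta> + 2 + \<nu>)" using elim by (simp add: powr_add)
      finally show ?case .
    qed
    have "((\<lambda>r::real. r powr (\<theta> + 2 + \<nu>)) \<longlongrightarrow> 0) (at_right 0)"
    proof (rule tendsto_zero_powrI)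
      show "((\<lambda>r::real. r) \<longlongrightarrow> 0) (at_right 0)" by (rule tendsto_ident_at)
      show "((\<lambda>r::real. \<theta> + 2 + \<nu>) \<longlongrightarrow> \<theta> + 2 + \<nu>) (at_right 0)" by (rule tendsto_const)
      show "\<forall>\<^sub>F r in at_right 0. 0 \<le> (r::real)"
        using eventually_at_right_less[of "0::real"] by (rule eventually_mono) simp
      show "0 < \<theta> + 2 + \<nu>" using th nu by simp
    qed
    then show "((\<lambda>r. c * r powr (\<theta> + 2 + \<nu>)) \<longlongrightarrow> 0) (at_right 0)"
      by (rule tendsto_mult_right_zero)
  qed
  have "((\<lambda>r. \<mu> * (r powr (\<theta> + 2) * \<bar>f r\<bar>)) \<longlongrightarrow> 0) (at_right 0)"
    using t2 by (rule tendsto_mult_right_zero)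
  from tendsto_add_zero[OF t1 this] show ?thesis .
qed

lemma powr_deriv_approx:
  fixes k0 p \<gamma> \<eta> :: real
  assumes g: "\<gamma> > 0" and e: "\<eta> > 0"
  shows "\<exists>dQ>0. \<forall>w. \<bar>w - \<gamma>\<bar> < dQ \<longrightarrow>
     \<bar>k0 * w powr p - k0 * \<gamma> powr p - k0 * p * \<gamma> powr (p - 1) * (w - \<gamma>)\<bar> \<le> \<eta> * \<bar>w - \<gamma>\<bar>"
proof -
  have "((\<lambda>w. k0 * w powr p) has_real_derivative k0 * (p * \<gamma> powr (p - 1))) (at \<gamma>)"
    using g by (auto intro!: derivative_eq_intros)
  then have "((\<lambda>w. k0 * w powr p) has_derivative (\<lambda>h. (k0 * (p * \<gamma> powr (p - 1))) * h)) (at \<gamma>)"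
    by (simp add: has_field_derivative_def)
  then obtain dQ where "dQ > 0" and dQ: "\<forall>y. norm (y - \<gamma>) < dQ \<longrightarrow>
     norm (k0 * y powr p - k0 * \<gamma> powr p - (k0 * (p * \<gamma> powr (p - 1))) * (y - \<gamma>)) \<le> \<eta> * norm (y - \<gamma>)"
    using e unfolding has_derivative_at_alt by blast
  then show ?thesis
    by (intro exI[of _ dQ]) (auto simp: algebra_simps)
qed

lemma V_upper:
  fixes \<delta> A x y :: real
  assumes "\<delta> \<ge> 0" "A \<ge> 0"
  shows "A * x^2 + \<delta> * x * y + y^2 \<le> (A + \<delta> + 1) * (x^2 + y^2)"
proof -
  have "2 * (x * y) \<le> x^2 + y^2" by (rule sum_squares_bound)
  moreover have "x^2 \<ge> 0" "y^2 \<ge> 0" by auto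
  ultimately have "x * y \<le> x^2 + y^2" by linarith
  then have "\<delta> * (x * y) \<le> \<delta> * (x^2 + y^2)" using assms(1) by (rule mult_left_mono)
  moreover have "(A + \<delta> + 1) * (x^2 + y^2) = A * x^2 + \<delta> * (x^2 + y^2) + y^2 + (A * y^2 + x^2)"
    by (simp add: algebra_simps)
  moreover have "A * y^2 \<ge> 0" using assms(2) by simp
  moreover have "\<delta> * x * y = \<delta> * (x * y)" by simp
  ultimately show ?thesis using \<open>x^2 \<ge> 0\<close> by linarith
qed

lemma V_lower:
  fixes \<delta> \<kappa> x y :: real
  assumes "\<kappa> > 0"
  shows "(\<kappa> + \<delta>^2/2) * x^2 + \<delta> * x * y + y^2 \<ge> min \<kappa> (1/2) * (x^2 + y^2)"
proof -
  have e: "(\<kappa> + \<delta>^2/2) * x^2 + \<delta> * x * y + y^2 = \<kappa> * x^2 + y^2 / 2 + (\<delta> * x + y)^2 / 2"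
    by (simp add: power2_eq_square field_simps)
  have "min \<kappa> (1/2) * x^2 \<le> \<kappa> * x^2" by (intro mult_right_mono) auto
  moreover have "min \<kappa> (1/2) * y^2 \<le> (1/2) * y^2" by (intro mult_right_mono) auto
  moreover have "(\<delta> * x + y)^2 / 2 \<ge> 0" by simp
  moreover have "min \<kappa> (1/2) * (x^2 + y^2) = min \<kappa> (1/2) * x^2 + min \<kappa> (1/2) * y^2"
    by (simp add: distrib_left)
  ultimately show ?thesis unfolding e by linarith
qed

lemma poly_id:
  fixes d \<delta> \<kappa> A N2 \<theta> p x y T \<gamma> :: real
  assumes "d = N2 - \<theta>" "\<delta> = N2 - 2 * \<theta>" "\<kappa> = (p - 1) * \<theta> * d" "A = \<kappa> + \<delta>^2/2"
  shows "A * (2 * x * y) + \<delta> * (y * y + x * (\<theta> * y - (\<theta> - N2) * (\<theta> * (\<gamma> + x) - y) - T))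
      + 2 * y * (\<theta> * y - (\<theta> - N2) * (\<theta> * (\<gamma> + x) - y) - T)
    = - \<delta> * \<kappa> * x^2 - \<delta> * y^2 - (\<delta> * x + 2 * y) * ((T - \<theta> * d * \<gamma> - p * \<theta> * d * x))"
  unfolding assms by (simp add: power2_eq_square field_simps)

lemma barrier:
  fixes V V' :: "real \<Rightarrow> real" and a b R :: real
  assumes ab: "a \<le> b" and cV: "continuous_on {a..b} V" and Va: "V a < R"
    and neg: "\<And>r. a < r \<Longrightarrow> r \<le> b \<Longrightarrow> V r = R \<Longrightarrow> (V has_real_derivative V' r) (at r) \<and> V' r < 0"
  shows "\<forall>r\<in>{a..b}. V r \<le> R"
proof (rule ccontr)
  assume "\<not> ?thesis"
  then obtain t where t: "t \<in> {a..b}" "V t > R" by force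
  define S where "S = {a..b} \<inter> V -` {R..}"
  have cS: "closed S" unfolding S_def by (rule continuous_closed_preimage[OF cV]) auto
  have tS: "t \<in> S" using t unfolding S_def by auto
  have bS: "bdd_below S" unfolding S_def by (rule bdd_belowI[of _ a]) auto
  define s where "s = Inf S"
  have sS: "s \<in> S" unfolding s_def using cS tS bS closed_contains_Inf by blast
  have low: "\<And>z. z \<in> S \<Longrightarrow> s \<le> z" unfolding s_def using bS by (simp add: cInf_lower)
  have s1: "a \<le> s" "s \<le> b" "V s \<ge> R" using sS unfolding S_def by auto
  have "s \<noteq> a" using s1 Va by auto
  with s1 have as: "a < s" by simp
  have cV': "continuous_on {a..s} V" by (rule continuous_on_subset[OF cV]) (use s1 in auto)
  obtain c where c: "a \<le> c" "c \<le> s" "V c = R"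
    using IVT'[of V a R s, OF _ _ _ cV'] Va s1 by auto
  have "c \<in> S" using c s1 unfolding S_def by auto
  then have "s \<le> c" by (rule low)
  with c have Vs: "V s = R" by auto
  from neg[OF as s1(2) Vs] have dV: "(V has_real_derivative V' s) (at s)" "V' s < 0" by auto
  obtain dd where dd: "dd > 0" "\<forall>h>0. h < dd \<longrightarrow> V s < V (s - h)"
    using DERIV_neg_dec_left[OF dV] by blast
  define hh where "hh = min dd (s - a) / 2"
  have hh: "hh > 0" "hh < dd" "hh < s - a" using dd as unfolding hh_def by auto
  then have "V s < V (s - hh)" using dd by auto
  then have "s - hh \<in> S" using Vs hh s1 unfolding S_def by auto
  then have "s \<le> s - hh" by (rule low)
  with hh show False by simp
qed

lemma small_from_V:
  fixes \<delta> \<kappa> x y \<epsilon> \<epsilon>0 h KK :: real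
  assumes k: "\<kappa> > 0" and V: "(\<kappa> + \<delta>^2/2) * x^2 + \<delta> * x * y + y^2 \<le> KK * \<epsilon>^2"
    and eps: "0 < \<epsilon>" "\<epsilon> \<le> \<epsilon>0" "\<epsilon>0 \<le> 1"
    and e0: "\<epsilon>0 \<le> h^2 / (2 * (1 + KK / min \<kappa> (1/2)))" and h: "h > 0" and KK: "KK > 0"
  shows "\<bar>x\<bar> < h" "\<bar>x\<bar> \<le> (1 + KK / min \<kappa> (1/2)) * \<epsilon>" "\<bar>y\<bar> \<le> (1 + KK / min \<kappa> (1/2)) * \<epsilon>"
proof -
  define c1 where "c1 = min \<kappa> (1/2)"
  define t where "t = KK / c1"
  have c1: "c1 > 0" using k by (simp add: c1_def)
  have t: "t > 0" using c1 KK by (simp add: t_def)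
  have "c1 * (x^2 + y^2) \<le> KK * \<epsilon>^2" using V_lower[where \<delta>=\<delta> and \<kappa>=\<kappa> and x=x and y=y, OF k] V unfolding c1_def by linarith
  then have "x^2 + y^2 \<le> KK * \<epsilon>^2 / c1" using c1 by (simp add: le_divide_eq mult.commute)
  moreover have "KK * \<epsilon>^2 / c1 = t * \<epsilon>^2" unfolding t_def by simp
  ultimately have "x^2 + y^2 \<le> t * \<epsilon>^2" by simp
  then have x2: "x^2 \<le> t * \<epsilon>^2" and y2: "y^2 \<le> t * \<epsilon>^2"
    using zero_le_power2[of x] zero_le_power2[of y] by linarith+
  have "(1 + t)^2 = 1 + 2 * t + t^2" by (simp add: power2_eq_square algebra_simps)
  then have "t \<le> (1 + t)^2" using t zero_le_power2[of t] by linarith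
  then have "t * \<epsilon>^2 \<le> (1 + t)^2 * \<epsilon>^2" by (rule mult_right_mono) simp
  then have tt: "t * \<epsilon>^2 \<le> ((1 + t) * \<epsilon>)^2" by (simp add: power_mult_distrib)
  have "\<bar>x\<bar> \<le> \<bar>(1 + t) * \<epsilon>\<bar>" unfolding abs_le_square_iff using x2 tt by linarith
  then show "\<bar>x\<bar> \<le> (1 + KK / min \<kappa> (1/2)) * \<epsilon>" using t eps unfolding t_def c1_def by simp
  have "\<bar>y\<bar> \<le> \<bar>(1 + t) * \<epsilon>\<bar>" unfolding abs_le_square_iff using y2 tt by linarith
  then show "\<bar>y\<bar> \<le> (1 + KK / min \<kappa> (1/2)) * \<epsilon>" using t eps unfolding t_def c1_def by simp
  have "\<epsilon>^2 \<le> \<epsilon>0"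
  proof -
    have "\<epsilon>^2 \<le> \<epsilon> * 1" unfolding power2_eq_square using eps by (intro mult_left_mono) auto
    then show ?thesis using eps by simp
  qed
  then have "t * \<epsilon>^2 \<le> t * \<epsilon>0" using t by (intro mult_left_mono) auto
  also have "\<dots> \<le> t * (h^2 / (2 * (1 + t)))" using e0 t unfolding t_def c1_def by (intro mult_left_mono) auto
  also have "\<dots> < h^2"
  proof -
    have "t * (h^2 / (2 * (1 + t))) = h^2 * (t / (2 * (1 + t)))" by simp
    moreover have "t / (2 * (1 + t)) < 1" using t by (simp add: divide_less_eq)
    moreover have "h^2 > 0" using h by simp
    ultimately have "h^2 * (t / (2 * (1 + t))) < h^2 * 1" by (intro mult_strict_left_mono) auto
    then show ?thesis using \<open>t * (h^2 / (2 * (1 + t))) = h^2 * (t / (2 * (1 + t)))\<close> by (simp add: mult.commute)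
  qed
  finally have "\<bar>x\<bar>^2 < h^2" using x2 by simp
  then show "\<bar>x\<bar> < h" using h power_less_imp_less_base[of "\<bar>x\<bar>" 2 h] by simp
qed

lemma powr_pos_eqs:
  fixes r a b :: real
  assumes "r > 0"
  shows "r powr a * r powr b = r powr (a + b)" "r powr (-a) * r powr a = 1" "r powr (a - 1) = r powr a / r"
  using assms by (auto simp: powr_add[symmetric] powr_diff)

theorem lemma3p6:
  fixes N :: nat and \<mu> p \<alpha> k0 \<nu> :: real and K f :: "real \<Rightarrow> real"
  assumes N: "N \<ge> 3"
    and mu: "\<mu> \<ge> 0"
    and K_cont: "continuous_on {0<..} K"
    and K_pos: "\<And>r. r > 0 \<Longrightarrow> K r > 0"
    and alpha: "\<alpha> > -2" and k0: "k0 > 0"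
    and K_asym: "((\<lambda>r. K r / r powr \<alpha>) \<longlongrightarrow> k0) (at_right 0)"
    and f_cont: "continuous_on {0<..} f"
    and f_nonneg: "\<And>r. r > 0 \<Longrightarrow> f r \<ge> 0"
    and f_nonzero: "\<exists>r>0. f r \<noteq> 0"
    and nu: "\<nu> > -2"
    and f_asym: "f \<in> O[at_right 0](\<lambda>r. r powr \<nu>)"
    and p: "p > pS N \<alpha>"
  shows "\<exists>\<epsilon>0>0. \<exists>C0>0. \<forall>\<epsilon>. 0 < \<epsilon> \<and> \<epsilon> \<le> \<epsilon>0 \<longrightarrow>
           (\<exists>\<rho>>0. \<forall>\<zeta>>0. \<forall>u. regular_solution N K p \<mu> f \<zeta> u \<longrightarrow>
              (\<forall>r1. 0 < r1 \<and> r1 < \<rho> \<and>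
                 \<bar>u r1 - gam N k0 \<alpha> p * r1 powr (- theta \<alpha> p)\<bar>
                    \<le> \<epsilon> * r1 powr (- theta \<alpha> p) \<and>
                 \<bar>deriv u r1 + theta \<alpha> p * gam N k0 \<alpha> p * r1 powr (-1 - theta \<alpha> p)\<bar>
                    \<le> \<epsilon> * r1 powr (-1 - theta \<alpha> p)
               \<longrightarrow> (\<forall>r\<in>{0..\<rho>}. u r > 0) \<and>
                   (\<forall>r. r1 < r \<and> r \<le> \<rho> \<longrightarrow>
                      \<bar>u r - gam N k0 \<alpha> p * r powr (- theta \<alpha> p)\<bar>
                        \<le> C0 * \<epsilon> * r powr (- theta \<alpha> p) \<and>
                      \<bar>deriv u r + theta \<alpha> p * gam N k0 \<alpha> p * r powr (-1 - theta \<alpha> p)\<bar>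
                        \<le> C0 * \<epsilon> * r powr (-1 - theta \<alpha> p))))"
proof -
  define \<theta> where "\<theta> = theta \<alpha> p"
  define \<gamma> where "\<gamma> = gam N k0 \<alpha> p"
  note cf = consts_facts[OF N alpha k0 p, folded \<theta>_def \<gamma>_def]
  have p1: "p > 1" and th: "\<theta> > 0" and th2: "2 * \<theta> < real N - 2" and thp: "\<theta> * (p - 1) = 2 + \<alpha>"
    and gpos: "\<gamma> > 0" and kg1: "k0 * \<gamma> powr (p - 1) = \<theta> * (real N - 2 - \<theta>)"
    using cf by auto
  define d where "d = real N - 2 - \<theta>"
  define \<delta> where "\<delta> = real N - 2 - 2 * \<theta>"
  define \<kappa> where "\<kappa> = (p - 1) * \<theta> * d"
  define A where "A = \<kappa> + \<delta>^2/2"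
  define c1 where "c1 = min \<kappa> (1/2)"
  define c2 where "c2 = A + \<delta> + 1"
  define KK where "KK = 2 * c2 * (1 + (\<theta> + 1)^2)"
  define c3 where "c3 = \<delta> * min \<kappa> 1"
  define \<eta> where "\<eta> = c3 / (8 * (\<delta> + 2))"
  define lam where "lam = c3 / (4 * (\<delta> + 2))"
  have d: "d > 0" using th th2 by (simp add: d_def)
  have \<delta>: "\<delta> > 0" using th2 by (simp add: \<delta>_def)
  have \<kappa>: "\<kappa> > 0" using p1 th d by (simp add: \<kappa>_def)
  have A: "A > 0" using \<kappa> zero_le_power2[of \<delta>] by (simp add: A_def add_pos_nonneg)
  have c1: "c1 > 0" using \<kappa> by (simp add: c1_def)
  have c2: "c2 > 0" using A \<delta> by (simp add: c2_def)
  have KK: "KK > 0" using c2 by (simp add: KK_def add_pos_nonneg)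
  have c3: "c3 > 0" using \<delta> \<kappa> by (simp add: c3_def)
  have \<eta>: "\<eta> > 0" using c3 \<delta> by (simp add: \<eta>_def)
  have lam: "lam > 0" using c3 \<delta> by (simp add: lam_def)
  have kgp: "k0 * \<gamma> powr p = \<theta> * d * \<gamma>"
  proof -
    have "\<gamma> powr p = \<gamma> powr (p - 1) * \<gamma>" using gpos powr_add[of \<gamma> "p - 1" 1] by simp
    then show ?thesis using kg1 unfolding d_def by (simp add: mult.assoc[symmetric])
  qed
  have meq: "k0 * p * \<gamma> powr (p - 1) = p * \<theta> * d"
  proof -
    have "k0 * p * \<gamma> powr (p - 1) = p * (k0 * \<gamma> powr (p - 1))" by simp
    then show ?thesis using kg1 unfolding d_def by simp
  qed
  obtain dQ where dQ0: "dQ > 0" and dQ: "\<And>w. \<bar>w - \<gamma>\<bar> < dQ \<Longrightarrow>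
     \<bar>k0 * w powr p - k0 * \<gamma> powr p - k0 * p * \<gamma> powr (p - 1) * (w - \<gamma>)\<bar> \<le> \<eta> * \<bar>w - \<gamma>\<bar>"
    using powr_deriv_approx[OF gpos \<eta>, of k0 p] by blast
  define h where "h = min dQ (\<gamma>/2)"
  have h: "h > 0" "h \<le> dQ" "h \<le> \<gamma>/2" using dQ0 gpos by (auto simp: h_def)
  define \<epsilon>0 where "\<epsilon>0 = min 1 (h^2 / (2 * (1 + KK / c1)))"
  have e0: "\<epsilon>0 > 0" "\<epsilon>0 \<le> 1" "\<epsilon>0 \<le> h^2 / (2 * (1 + KK / c1))"
    using h KK c1 by (auto simp: \<epsilon>0_def add_pos_pos)
  define C0 where "C0 = (1 + \<theta>) * (1 + KK / c1)"
  have C0: "C0 > 0" using th KK c1 by (simp add: C0_def add_pos_pos)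
  show ?thesis
  proof (rule exI[of _ \<epsilon>0], rule conjI[OF e0(1)], rule exI[of _ C0], rule conjI[OF C0], intro allI impI)
    fix \<epsilon> :: real
    assume "0 < \<epsilon> \<and> \<epsilon> \<le> \<epsilon>0"
    then have eps: "0 < \<epsilon>" "\<epsilon> \<le> \<epsilon>0" by auto
    define Err where "Err = (\<lambda>r. \<bar>K r / r powr \<alpha> - k0\<bar> * (2 * \<gamma>) powr p + \<mu> * (r powr (\<theta> + 2) * \<bar>f r\<bar>))"
    have "(Err \<longlongrightarrow> 0) (at_right 0)"
      unfolding Err_def by (rule err_tendsto[OF K_asym f_asym nu th])
    then have "eventually (\<lambda>r. Err r < lam * \<epsilon>) (at_right 0)"
      using lam eps by (intro order_tendstoD(2)) auto
    then obtain b where b: "b > 0" and hb: "\<And>r. r > 0 \<Longrightarrow> r < b \<Longrightarrow> Err r < lam * \<epsilon>"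
      unfolding eventually_at_right_field by auto
    define \<rho> where "\<rho> = b / 2"
    have \<rho>: "\<rho> > 0" "\<rho> < b" using b by (auto simp: \<rho>_def)
    show "\<exists>\<rho>>0. \<forall>\<zeta>>0. \<forall>u. regular_solution N K p \<mu> f \<zeta> u \<longrightarrow>
              (\<forall>r1. 0 < r1 \<and> r1 < \<rho> \<and>
                 \<bar>u r1 - gam N k0 \<alpha> p * r1 powr (- theta \<alpha> p)\<bar>
                    \<le> \<epsilon> * r1 powr (- theta \<alpha> p) \<and>
                 \<bar>deriv u r1 + theta \<alpha> p * gam N k0 \<alpha> p * r1 powr (-1 - theta \<alpha> p)\<bar>
                    \<le> \<epsilon> * r1 powr (-1 - theta \<alpha> p)
               \<longrightarrow> (\<forall>r\<in>{0..\<rho>}. u r > 0) \<and>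
                   (\<forall>r. r1 < r \<and> r \<le> \<rho> \<longrightarrow>
                      \<bar>u r - gam N k0 \<alpha> p * r powr (- theta \<alpha> p)\<bar>
                        \<le> C0 * \<epsilon> * r powr (- theta \<alpha> p) \<and>
                      \<bar>deriv u r + theta \<alpha> p * gam N k0 \<alpha> p * r powr (-1 - theta \<alpha> p)\<bar>
                        \<le> C0 * \<epsilon> * r powr (-1 - theta \<alpha> p)))"
      unfolding \<theta>_def[symmetric] \<gamma>_def[symmetric]
    proof (rule exI[of _ \<rho>], rule conjI[OF \<rho>(1)], intro allI impI)
      fix \<zeta> :: real and u :: "real \<Rightarrow> real" and r1 :: real
      assume z: "\<zeta> > 0" and reg: "regular_solution N K p \<mu> f \<zeta> u"
      assume hyp: "0 < r1 \<and> r1 < \<rho> \<and> \<bar>u r1 - \<gamma> * r1 powr (- \<theta>)\<bar> \<le> \<epsilon> * r1 powr (- \<theta>) \<and>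
           \<bar>deriv u r1 + \<theta> * \<gamma> * r1 powr (-1 - \<theta>)\<bar> \<le> \<epsilon> * r1 powr (-1 - \<theta>)"
      then have r1: "0 < r1" "r1 < \<rho>" and hyp1: "\<bar>u r1 - \<gamma> * r1 powr (- \<theta>)\<bar> \<le> \<epsilon> * r1 powr (- \<theta>)"
        and hyp2: "\<bar>deriv u r1 + \<theta> * \<gamma> * r1 powr (-1 - \<theta>)\<bar> \<le> \<epsilon> * r1 powr (-1 - \<theta>)" by auto
      have p0: "p > 0" using p1 by simp
      define g where "g = (\<lambda>s. K s * max (u s) 0 powr p + \<mu> * f s)"
      define H2 where "H2 = (\<lambda>s. s powr (real N - 1) * g s)"
      note R = reg_props[OF N K_cont f_cont p0 reg g_def H2_def]
      define I where "I = (\<lambda>r. integral {0..r} H2)"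
      have u0: "u 0 = \<zeta>" using R(1) .
      have Du: "\<And>r. r > 0 \<Longrightarrow> (u has_real_derivative (- (r powr (1 - real N)) * I r)) (at r)"
        using R(4) unfolding I_def .
      have DI: "\<And>r. r > 0 \<Longrightarrow> (I has_real_derivative H2 r) (at r)"
        using R(3) unfolding I_def .
      have g_nn: "g s \<ge> 0" if "s > 0" for s
        unfolding g_def using K_pos[OF that] f_nonneg[OF that] mu
        by (intro add_nonneg_nonneg mult_nonneg_nonneg) auto
      have H2_nn: "H2 s \<ge> 0" if "s \<ge> 0" for s
      proof (cases "s = 0")
        case True then show ?thesis by (simp add: H2_def)
      next
        case False then show ?thesis using that g_nn[of s] by (simp add: H2_def)
      qed
      have I_nn: "I r \<ge> 0" if "r > 0" for r
        unfolding I_def using R(2)[OF that] H2_nn by (intro integral_nonneg) auto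
      have du: "deriv u r = - (r powr (1 - real N)) * I r" if "r > 0" for r
        using Du[OF that] by (rule DERIV_imp_deriv)
      define w where "w = (\<lambda>r. r powr \<theta> * u r)"
      define x where "x = (\<lambda>r. w r - \<gamma>)"
      define yv where "yv = (\<lambda>r. \<theta> * w r - r powr (\<theta> + 2 - real N) * I r)"
      define x' where "x' = (\<lambda>r. yv r / r)"
      define Y where "Y = (\<lambda>r. \<theta> * yv r - (\<theta> + 2 - real N) * (r powr (\<theta> + 2 - real N) * I r) - r powr (\<theta> + 2) * g r)"
      define y' where "y' = (\<lambda>r. Y r / r)"
      define V where "V = (\<lambda>r. A * (x r)^2 + \<delta> * x r * yv r + (yv r)^2)"
      define V' where "V' = (\<lambda>r. A * (2 * x r * x' r) + \<delta> * (x' r * yv r + x r * y' r) + 2 * yv r * y' r)"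
      have Dw: "(w has_real_derivative x' r) (at r)" if r: "r > 0" for r
      proof -
        have "(w has_real_derivative (\<theta> * r powr (\<theta> - 1) * u r + r powr \<theta> * (- (r powr (1 - real N)) * I r))) (at r)"
          unfolding w_def using r by (auto intro!: derivative_eq_intros Du)
        moreover have "\<theta> * r powr (\<theta> - 1) * u r + r powr \<theta> * (- (r powr (1 - real N)) * I r) = x' r"
        proof -
          have e1: "r powr (\<theta> - 1) = r powr \<theta> / r" using powr_pos_eqs(3)[OF r] .
          have "r powr \<theta> * r powr (1 - real N) = r powr (\<theta> + 2 - real N - 1)"
            using powr_pos_eqs(1)[OF r, of \<theta> "1 - real N"] by (simp add: algebra_simps)
          also have "\<dots> = r powr (\<theta> + 2 - real N) / r" using powr_pos_eqs(3)[OF r] .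
          finally have e2: "r powr \<theta> * r powr (1 - real N) = r powr (\<theta> + 2 - real N) / r" .
          have "\<theta> * r powr (\<theta> - 1) * u r + r powr \<theta> * (- (r powr (1 - real N)) * I r)
              = \<theta> * (r powr \<theta> / r) * u r - (r powr \<theta> * r powr (1 - real N)) * I r"
            unfolding e1 by (simp add: algebra_simps)
          also have "\<dots> = \<theta> * (r powr \<theta> / r) * u r - (r powr (\<theta> + 2 - real N) / r) * I r"
            unfolding e2 ..
          also have "\<dots> = x' r" unfolding x'_def yv_def w_def by (simp add: diff_divide_distrib)
          finally show ?thesis .
        qed
        ultimately show ?thesis by simp
      qed
      have Dx: "(x has_real_derivative x' r) (at r)" if r: "r > 0" for r
        unfolding x_def using Dw[OF r] by (auto intro!: derivative_eq_intros)
      have Dy: "(yv has_real_derivative y' r) (at r)" if r: "r > 0" for r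
      proof -
        have "(yv has_real_derivative (\<theta> * x' r - ((\<theta> + 2 - real N) * r powr (\<theta> + 2 - real N - 1) * I r + r powr (\<theta> + 2 - real N) * H2 r))) (at r)"
          unfolding yv_def using r by (auto intro!: derivative_eq_intros Dw DI)
        moreover have "\<theta> * x' r - ((\<theta> + 2 - real N) * r powr (\<theta> + 2 - real N - 1) * I r + r powr (\<theta> + 2 - real N) * H2 r) = y' r"
        proof -
          have e1: "r powr (\<theta> + 2 - real N - 1) = r powr (\<theta> + 2 - real N) / r" using powr_pos_eqs(3)[OF r] .
          have "r powr (\<theta> + 2 - real N) * r powr (real N - 1) = r powr (\<theta> + 2 - 1)"
            using powr_pos_eqs(1)[OF r, of "\<theta> + 2 - real N" "real N - 1"] by (simp add: algebra_simps)
          also have "\<dots> = r powr (\<theta> + 2) / r" using powr_pos_eqs(3)[OF r] .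
          finally have e2: "r powr (\<theta> + 2 - real N) * H2 r = r powr (\<theta> + 2) * g r / r"
            unfolding H2_def by (simp add: mult.assoc[symmetric])
          have "\<theta> * x' r - ((\<theta> + 2 - real N) * r powr (\<theta> + 2 - real N - 1) * I r + r powr (\<theta> + 2 - real N) * H2 r)
             = \<theta> * (yv r / r) - ((\<theta> + 2 - real N) * (r powr (\<theta> + 2 - real N) / r) * I r + r powr (\<theta> + 2) * g r / r)"
            unfolding e1 e2 x'_def ..
          also have "\<dots> = y' r" unfolding y'_def Y_def by (simp add: diff_divide_distrib add_divide_distrib)
          finally show ?thesis .
        qed
        ultimately show ?thesis by simp
      qed
      have DV: "(V has_real_derivative V' r) (at r)" if r: "r > 0" for r
        unfolding V_def V'_def using r by (auto intro!: derivative_eq_intros Dx Dy simp: algebra_simps)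
      have contV: "continuous_on {r1..\<rho>} V"
        using r1 by (intro continuous_at_imp_continuous_on ballI DERIV_isCont[OF DV]) auto
      have rel1: "u r - \<gamma> * r powr (- \<theta>) = r powr (- \<theta>) * x r" if r: "r > 0" for r
      proof -
        have "r powr (- \<theta>) * x r = (r powr (- \<theta>) * r powr \<theta>) * u r - \<gamma> * r powr (- \<theta>)"
          unfolding x_def w_def by (simp add: algebra_simps)
        then show ?thesis using powr_pos_eqs(2)[OF r, of \<theta>] by simp
      qed
      have rel2: "deriv u r + \<theta> * \<gamma> * r powr (-1 - \<theta>) = r powr (-1 - \<theta>) * (yv r - \<theta> * x r)" if r: "r > 0" for r
      proof -
        have e: "r powr (-1 - \<theta>) * r powr (\<theta> + 2 - real N) = r powr (1 - real N)"
          using powr_pos_eqs(1)[OF r, of "-1 - \<theta>" "\<theta> + 2 - real N"] by simp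
        have "r powr (-1 - \<theta>) * (yv r - \<theta> * x r) = \<theta> * \<gamma> * r powr (-1 - \<theta>) - (r powr (-1 - \<theta>) * r powr (\<theta> + 2 - real N)) * I r"
          unfolding yv_def x_def by (simp add: algebra_simps)
        then show ?thesis using du[OF r] e by simp
      qed
      have rp: "r powr (- \<theta>) > 0" "r powr (-1 - \<theta>) > 0" if "r > 0" for r
        using that by auto
      have x1: "\<bar>x r1\<bar> \<le> \<epsilon>"
      proof -
        have "r1 powr (- \<theta>) * \<bar>x r1\<bar> \<le> r1 powr (- \<theta>) * \<epsilon>"
          using hyp1 rel1[OF r1(1)] rp[OF r1(1)] by (simp add: abs_mult mult.commute)
        then show ?thesis using rp[OF r1(1)] by (simp add: mult_le_cancel_left_pos)
      qed
      have y1: "\<bar>yv r1 - \<theta> * x r1\<bar> \<le> \<epsilon>"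
      proof -
        have "r1 powr (-1 - \<theta>) * \<bar>yv r1 - \<theta> * x r1\<bar> \<le> r1 powr (-1 - \<theta>) * \<epsilon>"
          using hyp2 rel2[OF r1(1)] rp[OF r1(1)] by (simp add: abs_mult mult.commute)
        then show ?thesis using rp[OF r1(1)] by (simp add: mult_le_cancel_left_pos)
      qed
      have Vr1: "V r1 < KK * \<epsilon>^2"
      proof -
        have "\<bar>yv r1\<bar> \<le> \<bar>\<theta> * x r1\<bar> + \<bar>yv r1 - \<theta> * x r1\<bar>"
          using abs_triangle_ineq[of "\<theta> * x r1" "yv r1 - \<theta> * x r1"] by simp
        also have "\<bar>\<theta> * x r1\<bar> = \<theta> * \<bar>x r1\<bar>" using th by (simp add: abs_mult)
        finally have "\<bar>yv r1\<bar> \<le> \<theta> * \<bar>x r1\<bar> + \<bar>yv r1 - \<theta> * x r1\<bar>" .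
        also have "\<dots> \<le> \<theta> * \<epsilon> + \<epsilon>" using x1 y1 th by (intro add_mono mult_left_mono) auto
        finally have "\<bar>yv r1\<bar> \<le> \<bar>(\<theta> + 1) * \<epsilon>\<bar>" using th eps by (simp add: algebra_simps)
        then have yy: "(yv r1)^2 \<le> ((\<theta> + 1) * \<epsilon>)^2" by (simp add: abs_le_square_iff)
        have xx: "(x r1)^2 \<le> \<epsilon>^2" using x1 eps by (simp add: abs_le_square_iff[symmetric])
        have "V r1 \<le> c2 * ((x r1)^2 + (yv r1)^2)"
          unfolding V_def c2_def using V_upper[of \<delta> A] \<delta> A by simp
        also have "\<dots> \<le> c2 * (\<epsilon>^2 + ((\<theta> + 1) * \<epsilon>)^2)"
          using xx yy c2 by (intro mult_left_mono add_mono) auto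
        also have "\<dots> = KK * \<epsilon>^2 / 2" unfolding KK_def by (simp add: power_mult_distrib power2_eq_square algebra_simps)
        also have "\<dots> < KK * \<epsilon>^2" using KK eps by simp
        finally show ?thesis .
      qed
      have small: "\<bar>x r\<bar> < h \<and> \<bar>x r\<bar> \<le> (1 + KK / c1) * \<epsilon> \<and> \<bar>yv r\<bar> \<le> (1 + KK / c1) * \<epsilon>"
        if "V r \<le> KK * \<epsilon>^2" for r
      proof -
        have V': "(\<kappa> + \<delta>^2/2) * (x r)^2 + \<delta> * x r * yv r + (yv r)^2 \<le> KK * \<epsilon>^2"
          using that unfolding V_def A_def .
        note S = small_from_V[OF \<kappa> V' eps e0(2) e0(3)[unfolded c1_def] h(1) KK]
        show ?thesis using S unfolding c1_def by auto
      qed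
      have neg: "(V has_real_derivative V' r) (at r) \<and> V' r < 0"
        if rr: "r1 < r" "r \<le> \<rho>" "V r = KK * \<epsilon>^2" for r
      proof -
        have r: "r > 0" using rr r1 by simp
        have xs: "\<bar>x r\<bar> < h" using small[of r] rr by simp
        have wx: "w r = \<gamma> + x r" unfolding x_def by simp
        have wpos: "w r > 0" "w r \<le> 2 * \<gamma>" using xs h wx gpos by auto
        have uw: "u r = r powr (- \<theta>) * w r"
          using rel1[OF r] wx by (simp add: algebra_simps)
        have upos: "u r > 0" using uw wpos rp[OF r] by simp
        define kk where "kk = K r / r powr \<alpha>"
        define wp where "wp = w r powr p"
        define T where "T = r powr (\<theta> + 2) * g r"
        have T: "T = kk * wp + \<mu> * (r powr (\<theta> + 2) * f r)"
        proof -
          have "u r powr p = r powr (- \<theta> * p) * wp"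
            unfolding uw wp_def using wpos r by (simp add: powr_mult powr_powr)
          then have "T = K r * (r powr (\<theta> + 2) * r powr (- \<theta> * p)) * wp + \<mu> * (r powr (\<theta> + 2) * f r)"
            unfolding T_def g_def using upos by (simp add: algebra_simps)
          also have "r powr (\<theta> + 2) * r powr (- \<theta> * p) = r powr (- \<alpha>)"
            using powr_pos_eqs(1)[OF r, of "\<theta> + 2" "- \<theta> * p"] thp by (simp add: algebra_simps)
          finally show ?thesis unfolding kk_def using r by (simp add: powr_minus divide_inverse)
        qed
        define Q where "Q = k0 * wp - k0 * \<gamma> powr p - k0 * p * \<gamma> powr (p - 1) * x r"
        define e where "e = T - k0 * wp"
        have hQ: "\<bar>Q\<bar> \<le> (\<delta> * min \<kappa> 1) / (8 * (\<delta> + 2)) * \<bar>x r\<bar>"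
          using dQ[of "w r"] xs h wx unfolding Q_def wp_def \<eta>_def c3_def by simp
        have wp: "wp \<ge> 0" "wp \<le> (2 * \<gamma>) powr p"
          unfolding wp_def using wpos p0 by (auto intro: powr_mono2)
        have he: "\<bar>e\<bar> \<le> (\<delta> * min \<kappa> 1) / (4 * (\<delta> + 2)) * \<epsilon>"
        proof -
          have "\<bar>e\<bar> = \<bar>(kk - k0) * wp + \<mu> * (r powr (\<theta> + 2) * f r)\<bar>"
            unfolding e_def T by (simp add: algebra_simps)
          also have "\<dots> \<le> \<bar>kk - k0\<bar> * wp + \<mu> * (r powr (\<theta> + 2) * \<bar>f r\<bar>)"
            using abs_triangle_ineq[of "(kk - k0) * wp" "\<mu> * (r powr (\<theta> + 2) * f r)"] wp mu f_nonneg[OF r] by (simp add: abs_mult)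
          also have "\<dots> \<le> \<bar>kk - k0\<bar> * (2 * \<gamma>) powr p + \<mu> * (r powr (\<theta> + 2) * \<bar>f r\<bar>)"
            using wp mu by (intro add_mono mult_left_mono) auto
          also have "\<dots> = Err r" unfolding Err_def kk_def by simp
          also have "\<dots> < lam * \<epsilon>" using hb[OF r] rr \<rho> by simp
          finally show ?thesis unfolding lam_def c3_def by simp
        qed
        have KKc: "KK \<ge> 2 * (\<kappa> + \<delta>^2/2 + \<delta> + 1)"
        proof -
          have "2 * c2 * 1 \<le> 2 * c2 * (1 + (\<theta> + 1)^2)" using c2 by (intro mult_left_mono) auto
          then show ?thesis unfolding KK_def c2_def A_def by simp
        qed
        have Vr: "(\<kappa> + \<delta>^2/2) * (x r)^2 + \<delta> * x r * yv r + (yv r)^2 = KK * \<epsilon>^2"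
          using rr(3) unfolding V_def A_def .
        have ki: "- \<delta> * \<kappa> * (x r)^2 - \<delta> * (yv r)^2 - (\<delta> * x r + 2 * yv r) * (Q + e) < 0"
          by (rule key_ineq[OF \<delta> \<kappa> hQ he eps(1) Vr KKc])
        have QE: "Q + e = T - \<theta> * d * \<gamma> - p * \<theta> * d * x r"
          unfolding Q_def e_def using kgp meq by simp
        have rx: "r * x' r = yv r" unfolding x'_def using r by simp
        have ry: "r * y' r = \<theta> * yv r - (\<theta> - (real N - 2)) * (\<theta> * (\<gamma> + x r) - yv r) - T"
          unfolding y'_def Y_def T_def using r by (simp add: yv_def x_def)
        have "r * V' r = A * (2 * x r * (r * x' r)) + \<delta> * ((r * x' r) * yv r + x r * (r * y' r)) + 2 * yv r * (r * y' r)"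
          unfolding V'_def by (simp add: algebra_simps)
        also have "\<dots> = - \<delta> * \<kappa> * (x r)^2 - \<delta> * (yv r)^2 - (\<delta> * x r + 2 * yv r) * (T - \<theta> * d * \<gamma> - p * \<theta> * d * x r)"
          unfolding rx ry by (rule poly_id) (auto simp: d_def \<delta>_def \<kappa>_def A_def)
        finally have "r * V' r < 0" using ki QE by simp
        then have "V' r < 0" using r by (simp add: mult_less_0_iff)
        then show ?thesis using DV[OF r] by simp
      qed
      have bound: "\<forall>r\<in>{r1..\<rho>}. V r \<le> KK * \<epsilon>^2"
        by (rule barrier[OF _ contV Vr1, of V']) (use r1 neg in auto)
      have upos_right: "u r > 0" if "r1 \<le> r" "r \<le> \<rho>" for r
      proof -
        have r: "r > 0" using that r1 by simp
        have "\<bar>x r\<bar> < h" using small[of r] bound that by auto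
        then have "w r > 0" using h unfolding x_def by auto
        moreover have "u r = r powr (- \<theta>) * w r"
          using rel1[OF r] unfolding x_def by (simp add: algebra_simps)
        ultimately show ?thesis using rp[OF r] by simp
      qed
      show "(\<forall>r\<in>{0..\<rho>}. u r > 0) \<and>
                   (\<forall>r. r1 < r \<and> r \<le> \<rho> \<longrightarrow>
                      \<bar>u r - \<gamma> * r powr (- \<theta>)\<bar>
                        \<le> C0 * \<epsilon> * r powr (- \<theta>) \<and>
                      \<bar>deriv u r + \<theta> * \<gamma> * r powr (-1 - \<theta>)\<bar>
                        \<le> C0 * \<epsilon> * r powr (-1 - \<theta>))"
      proof (intro conjI ballI allI impI)
        fix r assume "r \<in> {0..\<rho>}"
        then have r: "0 \<le> r" "r \<le> \<rho>" by auto
        show "u r > 0"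
        proof (cases "r1 \<le> r")
          case True then show ?thesis using upos_right r by simp
        next
          case False
          show ?thesis
          proof (cases "r = 0")
            case True then show ?thesis using u0 z by simp
          next
            case False
            with r have r0: "r > 0" by simp
            have "u r1 \<le> u r"
            proof (rule DERIV_nonpos_imp_nonincreasing[of r r1 u])
              show "r \<le> r1" using \<open>\<not> r1 \<le> r\<close> by simp
              fix t assume "r \<le> t" "t \<le> r1"
              then have t: "t > 0" using r0 by simp
              show "\<exists>y. (u has_real_derivative y) (at t) \<and> y \<le> 0"
                using Du[OF t] I_nn[OF t] by (intro exI[of _ "- (t powr (1 - real N)) * I t"]) simp
            qed
            moreover have "u r1 > 0" using upos_right[of r1] r1 by simp
            ultimately show ?thesis by simp
          qed
        qed
      next
        fix r assume rr: "r1 < r \<and> r \<le> \<rho>"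
        then have r: "r > 0" using r1 by simp
        have S: "\<bar>x r\<bar> \<le> (1 + KK / c1) * \<epsilon>" "\<bar>yv r\<bar> \<le> (1 + KK / c1) * \<epsilon>"
          using small[of r] bound rr by auto
        have t1: "1 + KK / c1 > 0" using KK c1 by (simp add: add_pos_pos)
        have "\<bar>x r\<bar> \<le> C0 * \<epsilon>"
        proof -
          have "(1 + \<theta>) * (1 + KK / c1) = (1 + KK / c1) + \<theta> * (1 + KK / c1)" by (simp add: algebra_simps add_divide_distrib)
          moreover have "\<theta> * (1 + KK / c1) \<ge> 0" using th t1 by simp
          ultimately have "1 + KK / c1 \<le> C0" unfolding C0_def by linarith
          then have "(1 + KK / c1) * \<epsilon> \<le> C0 * \<epsilon>" using eps by (intro mult_right_mono) auto
          then show ?thesis using S by linarith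
        qed
        then show "\<bar>u r - \<gamma> * r powr (- \<theta>)\<bar> \<le> C0 * \<epsilon> * r powr (- \<theta>)"
          unfolding rel1[OF r] using rp[OF r] by (simp add: abs_mult mult.commute mult_left_mono)
        have "\<bar>yv r - \<theta> * x r\<bar> \<le> \<bar>yv r\<bar> + \<bar>\<theta> * x r\<bar>" by (rule abs_triangle_ineq4)
        also have "\<bar>\<theta> * x r\<bar> = \<theta> * \<bar>x r\<bar>" using th by (simp add: abs_mult)
        finally have "\<bar>yv r - \<theta> * x r\<bar> \<le> \<bar>yv r\<bar> + \<theta> * \<bar>x r\<bar>" .
        also have "\<dots> \<le> (1 + KK / c1) * \<epsilon> + \<theta> * ((1 + KK / c1) * \<epsilon>)"
          using S th by (intro add_mono mult_left_mono) auto
        also have "\<dots> = C0 * \<epsilon>" unfolding C0_def by (simp add: algebra_simps add_divide_distrib)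
        finally have "\<bar>yv r - \<theta> * x r\<bar> \<le> C0 * \<epsilon>" .
        then show "\<bar>deriv u r + \<theta> * \<gamma> * r powr (-1 - \<theta>)\<bar> \<le> C0 * \<epsilon> * r powr (-1 - \<theta>)"
          unfolding rel2[OF r] using rp[OF r] by (simp add: abs_mult mult.commute mult_left_mono)
      qed
    qed
  qed
qed

end
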